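(* Let $G\in\mathbb{R}^{n\times n}$, $C:=\{X\in\mathbb{R}^{n\times n}\mid X\ge0\}$, $b:=[e^T\ e^T]^T\in\mathbb{R}^{2n}$, and consider \[ \min\Big\{\varphi(y):=\tfrac12\|\Pi_C(\mathcal{B}^*y+G)\|^2-\langle b,y\rangle-\tfrac12\|G\|^2\ \Big|\ y\in\mathrm{Ran}(\mathcal{B})\Big\}. \] Let $\{y^j\}$ be the infinite sequence generated by Algorithm SSNCG1 described in the context. Then $\{y^j\}\subseteq\mathrm{Ran}(\mathcal{B})$ is bounded, and any accumulation point $\hat y\in\mathrm{Ran}(\mathcal{B})$ of $\{y^j\}$ is an optimal solution of this minimization problem.
   Context: $e\in\mathbb{R}^n$ is the all-ones vector, $\|\cdot\|$ is the Frobenius/Euclidean norm, $\Pi_C$ is the projection onto $C$ (entrywise positive part). $\mathcal{B}:\mathbb{R}^{n\times n}\to\mathbb{R}^{2n}$, $\mathcal{B}(X)=[(Xe)^T\ (X^Te)^T]^T$, with adjoint $\mathcal{B}^*(y_1,y_2)=y_1e^T+ey_2^T$; $\mathrm{Ran}(\mathcal{B})$ is its range. The gradient is $\nabla\varphi(y)=\mathcal{B}\Pi_C(\mathcal{B}^*y+G)-b$. For $X\in\mathbb{R}^{n\times n}$ let $\Omega^X_{ij}=1$ if $X_{ij}\ge0$ and $0$ otherwise, and $\mathcal{U}(H)=\Omega^X\circ H$ ($\circ$ the Hadamard product). Algorithm SSNCG1: given $\mu\in(0,1/2)$, $\bar\eta\in(0,1)$, $\tau_1,\tau_2\in(0,1)$,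 $\tau\in(0,1]$, $\delta\in(0,1)$, and $y^0\in\mathrm{Ran}(\mathcal{B})$, for $j=0,1,\dots$: (1) take $\mathcal{U}_j$ as $\mathcal{U}$ with $X=\mathcal{B}^*y^j+G$, set $\mathcal{V}_j:=\mathcal{B}\mathcal{U}_j\mathcal{B}^*$ and $\varepsilon_j=\tau_1\min\{\tau_2,\|\nabla\varphi(y^j)\|\}$, and apply the conjugate gradient method starting from the zero vector to the linear system $(\mathcal{V}_j+\varepsilon_jI_{2n})d+\nabla\varphi(y^j)=0$, obtaining $d^j$ with $\|(\mathcal{V}_j+\varepsilon_jI_{2n})d^j+\nabla\varphi(y^j)\|\le\min(\bar\eta,\|\nabla\varphi(y^j)\|^{1+\tau})$; (2) set $\alpha_j=\delta^{m_j}$ where $m_j$ is the smallest nonnegative integer $m$ with $\varphi(y^j+\delta^md^j)\le\varphi(y^j)+\mu\delta^m\langle\nabla\varphi(y^j),d^j\rangle$; (3) set $y^{j+1}=y^j+\alpha_jd^j$. *)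

theory Defs
  imports "HOL-Analysis.Analysis"
begin

text \<open>Matrices in R^{n x n} are real^'n^'n (norm = Frobenius norm); vectors in
R^{2n} are pairs (y1, y2) of vectors in real^'n (norm/inner product = Euclidean).\<close>

definition ones :: "real ^ 'n" where "ones = (\<chi> i. 1)"

definition bvec :: "(real ^ 'n) \<times> (real ^ 'n)" where "bvec = (ones, ones)"

definition Bop :: "real ^ 'n ^ 'n \<Rightarrow> (real ^ 'n) \<times> (real ^ 'n)" where
  "Bop X = (X *v ones, transpose X *v ones)"

definition Bstar :: "(real ^ 'n) \<times> (real ^ 'n) \<Rightarrow> real ^ 'n ^ 'n" where
  "Bstar y = (\<chi> i j. fst y $ i + snd y $ j)"

definition RanB :: "((real ^ 'n) \<times> (real ^ 'n)) set" where
  "RanB = range Bop"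

definition projC :: "real ^ 'n ^ 'n \<Rightarrow> real ^ 'n ^ 'n" where
  "projC X = (\<chi> i j. max 0 (X $ i $ j))"

definition phi :: "real ^ 'n ^ 'n \<Rightarrow> (real ^ 'n) \<times> (real ^ 'n) \<Rightarrow> real" where
  "phi G y = (1/2) * (norm (projC (Bstar y + G)))\<^sup>2 - inner bvec y - (1/2) * (norm G)\<^sup>2"

definition grad_phi :: "real ^ 'n ^ 'n \<Rightarrow> (real ^ 'n) \<times> (real ^ 'n) \<Rightarrow> (real ^ 'n) \<times> (real ^ 'n)" where
  "grad_phi G y = Bop (projC (Bstar y + G)) - bvec"

definition Uop :: "real ^ 'n ^ 'n \<Rightarrow> real ^ 'n ^ 'n \<Rightarrow> real ^ 'n ^ 'n" where
  "Uop X H = (\<chi> i j. (if X $ i $ j \<ge> 0 then 1 else 0) * H $ i $ j)"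

definition Vop :: "real ^ 'n ^ 'n \<Rightarrow> (real ^ 'n) \<times> (real ^ 'n) \<Rightarrow> (real ^ 'n) \<times> (real ^ 'n)" where
  "Vop X d = Bop (Uop X (Bstar d))"

text \<open>Conjugate gradient method for the linear system A d + g = 0 (i.e. A d = -g),
started from the zero vector. State (x_k, r_k, p_k): iterate, residual -g - A x_k,
search direction.\<close>
fun cg :: "('a::real_inner \<Rightarrow> 'a) \<Rightarrow> 'a \<Rightarrow> nat \<Rightarrow> 'a \<times> 'a \<times> 'a" where
  "cg A g 0 = (0, -g, -g)"
| "cg A g (Suc k) =
     (case cg A g k of (x, r, p) \<Rightarrow>
        (let a = inner r r / inner p (A p);
             x' = x + a *\<^sub>R p;
             r' = r - a *\<^sub>R A p;
             bt = inner r' r' / inner r r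
         in (x', r', r' + bt *\<^sub>R p)))"

definition cg_iterate :: "('a::real_inner \<Rightarrow> 'a) \<Rightarrow> 'a \<Rightarrow> nat \<Rightarrow> 'a" where
  "cg_iterate A g k = fst (cg A g k)"

definition optimal :: "real ^ 'n ^ 'n \<Rightarrow> (real ^ 'n) \<times> (real ^ 'n) \<Rightarrow> bool" where
  "optimal G y \<longleftrightarrow> y \<in> RanB \<and> (\<forall>z \<in> RanB. phi G y \<le> phi G z)"

end

theory Submission
  imports Defs
begin


lemma inner_mat: "inner (X::real^'n^'m) Y = (\<Sum>i\<in>UNIV. \<Sum>j\<in>UNIV. X$i$j * Y$i$j)"
  by (simp add: inner_vec_def)

lemma norm_mat_sq: "(norm (X::real^'n^'m))\<^sup>2 = (\<Sum>i\<in>UNIV. \<Sum>j\<in>UNIV. (X$i$j)\<^sup>2)"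
  unfolding power2_norm_eq_inner inner_mat by (simp add: power2_eq_square)

lemma inner_pair: "inner (a::'a::real_inner, b::'b::real_inner) (c, d) = inner a c + inner b d"
  by (simp add: inner_prod_def)

lemma inner_Bop: "inner (Bop X) (y::(real^'n)\<times>(real^'n)) = inner X (Bstar y)"
proof -
  obtain a c where y: "y = (a,c)" by (cases y)
  have "inner (Bop X) y = (\<Sum>i\<in>UNIV. (\<Sum>j\<in>UNIV. X$i$j) * a$i) + (\<Sum>j\<in>UNIV. (\<Sum>i\<in>UNIV. X$i$j) * c$j)"
    by (simp add: Bop_def y inner_pair inner_vec_def matrix_vector_mult_def transpose_def ones_def)
  also have "\<dots> = (\<Sum>i\<in>UNIV. \<Sum>j\<in>UNIV. X$i$j * a$i) + (\<Sum>i\<in>UNIV. \<Sum>j\<in>UNIV. X$i$j * c$j)"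
  proof -
    have e1: "(\<Sum>i\<in>UNIV. (\<Sum>j\<in>UNIV. X$i$j) * a$i) = (\<Sum>i\<in>UNIV. \<Sum>j\<in>UNIV. X$i$j * a$i)"
      by (simp add: sum_distrib_right)
    have e2: "(\<Sum>j\<in>UNIV. (\<Sum>i\<in>UNIV. X$i$j) * c$j) = (\<Sum>i\<in>UNIV. \<Sum>j\<in>UNIV. X$i$j * c$j)"
      unfolding sum_distrib_right by (rule sum.swap)
    show ?thesis using e1 e2 by simp
  qed
  also have "\<dots> = inner X (Bstar y)"
    by (simp add: inner_mat Bstar_def y distrib_left sum.distrib)
  finally show ?thesis .
qed

lemma Bop_add: "Bop (X + Y) = Bop X + Bop Y"
  by (simp add: Bop_def matrix_vector_mult_def transpose_def vec_eq_iff sum.distrib algebra_simps)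
lemma Bop_scale: "Bop (c *\<^sub>R X) = c *\<^sub>R Bop X"
  by (simp add: Bop_def matrix_vector_mult_def transpose_def vec_eq_iff sum_distrib_left algebra_simps)
lemma linear_Bop: "linear Bop"
  by (rule linearI) (simp_all add: Bop_add Bop_scale)
lemma Bstar_add: "Bstar (x + y) = Bstar x + Bstar y"
  by (simp add: Bstar_def vec_eq_iff)
lemma Bstar_scale: "Bstar (c *\<^sub>R x) = c *\<^sub>R Bstar x"
  by (simp add: Bstar_def vec_eq_iff algebra_simps)
lemma linear_Bstar: "linear Bstar"
  by (rule linearI) (simp_all add: Bstar_add Bstar_scale)
lemma Uop_add: "Uop X (H + K) = Uop X H + Uop X K"
  by (simp add: Uop_def vec_eq_iff algebra_simps)
lemma Uop_scale: "Uop X (c *\<^sub>R H) = c *\<^sub>R Uop X H"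
  by (simp add: Uop_def vec_eq_iff algebra_simps)
lemma Vop_add: "Vop X (u + v) = Vop X u + Vop X v"
  by (simp add: Vop_def Bstar_add Uop_add Bop_add)
lemma Vop_scale: "Vop X (c *\<^sub>R v) = c *\<^sub>R Vop X v"
  by (simp add: Vop_def Bstar_scale Uop_scale Bop_scale)

lemma Vop_sym: "inner u (Vop X v) = inner (Vop X u) v"
proof -
  have "inner u (Vop X v) = inner (Uop X (Bstar v)) (Bstar u)"
    by (metis Vop_def inner_commute inner_Bop)
  also have "\<dots> = inner (Uop X (Bstar u)) (Bstar v)"
    by (simp add: inner_mat Uop_def algebra_simps)
  also have "\<dots> = inner (Vop X u) v" by (simp add: Vop_def inner_Bop)
  finally show ?thesis .
qed

lemma Vop_psd: "0 \<le> inner v (Vop X v)"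
proof -
  have "inner v (Vop X v) = inner (Uop X (Bstar v)) (Bstar v)"
    by (metis Vop_def inner_commute inner_Bop)
  also have "\<dots> = (\<Sum>i\<in>UNIV. \<Sum>j\<in>UNIV. (if X$i$j \<ge> 0 then 1 else 0) * (Bstar v $i$j)\<^sup>2)"
    by (simp add: inner_mat Uop_def power2_eq_square algebra_simps)
  also have "\<dots> \<ge> 0" by (intro sum_nonneg) auto
  finally show ?thesis .
qed

lemma norm_Uop: "norm (Uop X H) \<le> norm H"
proof -
  have "(norm (Uop X H))\<^sup>2 \<le> (norm H)\<^sup>2"
    unfolding norm_mat_sq by (intro sum_mono) (auto simp: Uop_def power2_eq_square)
  then show ?thesis by (simp add: power2_le_iff_abs_le)
qed

lemma norm_projC_diff: "norm (projC X - projC Y) \<le> norm (X - Y)"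
proof -
  have *: "(max 0 a - max 0 b)\<^sup>2 \<le> (a - b)\<^sup>2" for a b :: real
    by (simp add: abs_le_square_iff[symmetric])
  have "(norm (projC X - projC Y))\<^sup>2 \<le> (norm (X - Y))\<^sup>2"
    unfolding norm_mat_sq by (intro sum_mono) (auto simp: projC_def *)
  then show ?thesis by (simp add: power2_le_iff_abs_le)
qed

lemma RanB_subspace: "subspace (RanB :: ((real^'n)\<times>(real^'n)) set)"
  unfolding RanB_def by (rule linear_subspace_image[OF linear_Bop subspace_UNIV])

lemma bvec_RanB: "bvec \<in> RanB"
proof -
  have "Bop (mat 1 :: real^'n^'n) = bvec"
    by (simp add: Bop_def bvec_def)
  then show ?thesis unfolding RanB_def by (metis rangeI)
qed

lemma grad_RanB: "grad_phi G y \<in> RanB"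
  unfolding grad_phi_def
  by (rule subspace_diff[OF RanB_subspace _ bvec_RanB]) (simp add: RanB_def)

lemma Vop_RanB: "Vop X v \<in> RanB"
  by (simp add: Vop_def RanB_def)

lemma h_upper: "(max 0 s)\<^sup>2/2 \<le> (max 0 w)\<^sup>2/2 + max 0 w * (s - w) + (s-w)\<^sup>2/2" for s w :: real
proof (cases "w \<le> 0")
  case True
  then have "max 0 w = 0" by simp
  moreover have "(max 0 s)\<^sup>2 \<le> (s-w)\<^sup>2"
  proof (cases "s \<le> 0")
    case False
    have "s * w \<le> 0" using True False by (simp add: mult_nonneg_nonpos)
    have "(s-w)\<^sup>2 = s\<^sup>2 - 2*(s*w) + w\<^sup>2" by (simp add: power2_eq_square algebra_simps)
    moreover have "0 \<le> w\<^sup>2" by simp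
    ultimately have "s\<^sup>2 \<le> (s-w)\<^sup>2" using \<open>s * w \<le> 0\<close> by linarith
    then show ?thesis using False by simp
  qed simp
  ultimately show ?thesis by simp
next
  case False
  then have mw: "max 0 w = w" by simp
  show ?thesis
  proof (cases "s \<le> 0")
    case True
    have "0 \<le> s\<^sup>2/2" by simp
    also have "s\<^sup>2/2 = w\<^sup>2/2 + w * (s - w) + (s-w)\<^sup>2/2" by (simp add: power2_eq_square field_simps)
    finally show ?thesis using True mw by simp
  next
    case False
    then show ?thesis using mw by (simp add: power2_eq_square field_simps)
  qed
qed
lemma h_lower: "(max 0 s)\<^sup>2/2 \<ge> (max 0 w)\<^sup>2/2 + max 0 w * (s - w)" for s w :: real
proof (cases "w \<le> 0")
  case True
  then show ?thesis by simp
next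
  case False
  then have mw: "max 0 w = w" by simp
  show ?thesis
  proof (cases "s \<le> 0")
    case True
    have "w * s \<le> 0" using True False by (simp add: mult_nonneg_nonpos)
    have "0 \<le> w * w" by simp
    have "w\<^sup>2/2 + w * (s - w) = - (w*w)/2 + w * s" by (simp add: power2_eq_square algebra_simps)
    then have "w\<^sup>2/2 + w * (s - w) \<le> 0" using \<open>0 \<le> w * w\<close> \<open>w * s \<le> 0\<close> by linarith
    then show ?thesis using True mw by simp
  next
    case False
    have "0 \<le> (s - w)\<^sup>2/2" by simp
    then show ?thesis using False mw by (simp add: power2_eq_square algebra_simps)
  qed
qed
lemma fenchel: "x \<ge> 0 \<Longrightarrow> (max 0 w)\<^sup>2/2 \<ge> x * w - x\<^sup>2/2" for x w :: real
proof (cases "w \<le> 0")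
  case True
  assume x: "x \<ge> 0"
  have "x * w \<le> 0" using True x by (simp add: mult_nonneg_nonpos)
  moreover have "0 \<le> x\<^sup>2" by simp
  ultimately have "x * w - x\<^sup>2/2 \<le> 0" by linarith
  moreover have "max 0 w = 0" using True by simp
  ultimately show ?thesis by simp
next
  case False
  have "0 \<le> (w - x)\<^sup>2/2" by simp
  then show ?thesis using False by (simp add: power2_eq_square algebra_simps)
qed


lemma cg_zero:
  assumes "A 0 = 0"
  shows "cg A 0 k = (0, 0, 0)"
  by (induction k) (simp_all add: assms Let_def)

lemma cg_sub:
  assumes S: "subspace S" and AS: "\<And>v. v \<in> S \<Longrightarrow> A v \<in> S" and g: "g \<in> S"
  shows "case cg A g k of (x, r, p) \<Rightarrow> x \<in> S \<and> r \<in> S \<and> p \<in> S"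
proof (induction k)
  case 0
  then show ?case using S g by (simp add: subspace_0 subspace_neg)
next
  case (Suc k)
  obtain x r p where c: "cg A g k = (x, r, p)" by (cases "cg A g k") auto
  with Suc.IH have xs: "x \<in> S" and rs: "r \<in> S" and ps: "p \<in> S" by auto
  have aps: "A p \<in> S" using AS ps .
  define a where "a = inner r r / inner p (A p)"
  define r' where "r' = r - a *\<^sub>R A p"
  have r's: "r' \<in> S" unfolding r'_def by (intro subspace_diff[OF S rs] subspace_mul[OF S aps])
  show ?case using xs ps r's S
    by (simp add: c Let_def a_def[symmetric] r'_def[symmetric] subspace_add subspace_mul)
qed

lemma cg_inv:
  fixes A :: "'a::real_inner \<Rightarrow> 'a"
  assumes add: "\<And>u v. A (u + v) = A u + A v" and scl: "\<And>c u. A (c *\<^sub>R u) = c *\<^sub>R A u"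
    and sym: "\<And>u v. inner u (A v) = inner (A u) v"
    and pd: "\<And>v. v \<noteq> 0 \<Longrightarrow> 0 < inner v (A v)"
  shows "case cg A g k of (x, r, p) \<Rightarrow>
           r = -g - A x \<and> inner r p = inner r r \<and> inner x (A x) / 2 + inner g x \<le> 0"
proof (induction k)
  case 0
  have "A 0 = 0" using scl[of 0 0] by simp
  then show ?case by simp
next
  case (Suc k)
  obtain x r p where c: "cg A g k = (x, r, p)" by (cases "cg A g k") auto
  with Suc.IH have r: "r = -g - A x" and rp: "inner r p = inner r r"
    and q: "inner x (A x) / 2 + inner g x \<le> 0" by auto
  define a where "a = inner r r / inner p (A p)"
  define x' where "x' = x + a *\<^sub>R p"
  define r' where "r' = r - a *\<^sub>R A p"
  define bt where "bt = inner r' r' / inner r r"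
  have cs: "cg A g (Suc k) = (x', r', r' + bt *\<^sub>R p)"
    by (simp add: c Let_def a_def[symmetric] x'_def[symmetric] r'_def[symmetric] bt_def[symmetric])
  have A0: "A 0 = 0" using scl[of 0 0] by simp
  have r': "r' = -g - A x'" using r by (simp add: r'_def x'_def add scl algebra_simps)
  have r'p: "inner r' p = 0"
  proof (cases "p = 0")
    case True then show ?thesis by simp
  next
    case False
    then have "inner p (A p) > 0" by (rule pd)
    then have "a * inner p (A p) = inner r r" by (simp add: a_def)
    then show ?thesis
      by (simp add: r'_def inner_diff_left rp inner_commute[of "A p" p])
  qed
  then have rp': "inner r' (r' + bt *\<^sub>R p) = inner r' r'" by (simp add: inner_add_right)
  have q': "inner x' (A x') / 2 + inner g x' \<le> 0"
  proof (cases "p = 0")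
    case True then show ?thesis using q by (simp add: x'_def)
  next
    case False
    have pos: "inner p (A p) > 0" using pd False by blast
    have aeq: "a * inner p (A p) = inner r r" using pos by (simp add: a_def)
    have a0: "a \<ge> 0" using pos by (simp add: a_def)
    have s1: "inner x (A p) = inner p (A x)" using sym[of x p] by (simp add: inner_commute)
    have "A x + g = - r" using r by simp
    then have pr: "inner p (A x + g) = - inner r r"
      using rp by (simp add: inner_commute[of p r])
    have "inner x' (A x') / 2 + inner g x'
        = inner x (A x) / 2 + inner g x + a * inner p (A x + g) + a * (a * inner p (A p)) / 2"
      by (simp add: x'_def add scl inner_add_left inner_add_right s1 algebra_simps inner_commute[of g p])
    also have "\<dots> = inner x (A x) / 2 + inner g x - a * inner r r / 2"
      by (simp add: pr aeq)
    also have "\<dots> \<le> 0"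
    proof -
      have "0 \<le> a * inner r r" using a0 by simp
      then show ?thesis using q by linarith
    qed
    finally show ?thesis .
  qed
  show ?case using cs r' rp' q' by simp
qed

lemma projC_upper:
  "(norm (projC (W + H)))\<^sup>2 / 2 \<le> (norm (projC W))\<^sup>2 / 2 + inner (projC W) H + (norm H)\<^sup>2 / 2"
proof -
  have "(norm (projC (W + H)))\<^sup>2 / 2 = (\<Sum>i\<in>UNIV. \<Sum>j\<in>UNIV. (max 0 (W$i$j + H$i$j))\<^sup>2 / 2)"
    by (simp add: norm_mat_sq projC_def sum_divide_distrib)
  also have "\<dots> \<le> (\<Sum>i\<in>UNIV. \<Sum>j\<in>UNIV. (max 0 (W$i$j))\<^sup>2 / 2 + max 0 (W$i$j) * H$i$j + (H$i$j)\<^sup>2 / 2)"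
    apply (intro sum_mono)
    subgoal for i j using h_upper[of "W$i$j + H$i$j" "W$i$j"] by simp
    done
  also have "\<dots> = (norm (projC W))\<^sup>2 / 2 + inner (projC W) H + (norm H)\<^sup>2 / 2"
    by (simp add: norm_mat_sq inner_mat projC_def sum.distrib sum_divide_distrib)
  finally show ?thesis .
qed

lemma projC_lower:
  "(norm (projC W))\<^sup>2 / 2 + inner (projC W) H \<le> (norm (projC (W + H)))\<^sup>2 / 2"
proof -
  have "(norm (projC W))\<^sup>2 / 2 + inner (projC W) H
      = (\<Sum>i\<in>UNIV. \<Sum>j\<in>UNIV. (max 0 (W$i$j))\<^sup>2 / 2 + max 0 (W$i$j) * H$i$j)"
    by (simp add: norm_mat_sq inner_mat projC_def sum.distrib sum_divide_distrib)
  also have "\<dots> \<le> (\<Sum>i\<in>UNIV. \<Sum>j\<in>UNIV. (max 0 (W$i$j + H$i$j))\<^sup>2 / 2)"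
    apply (intro sum_mono)
    subgoal for i j using h_lower[where s="W$i$j + H$i$j" and w="W$i$j"] by simp
    done
  also have "\<dots> = (norm (projC (W + H)))\<^sup>2 / 2"
    by (simp add: norm_mat_sq projC_def sum_divide_distrib)
  finally show ?thesis .
qed

lemma projC_fenchel:
  assumes "\<And>i j. 0 \<le> X$i$j"
  shows "inner X W - (norm X)\<^sup>2 / 2 \<le> (norm (projC W))\<^sup>2 / 2"
proof -
  have "inner X W - (norm X)\<^sup>2 / 2 = (\<Sum>i\<in>UNIV. \<Sum>j\<in>UNIV. X$i$j * W$i$j - (X$i$j)\<^sup>2 / 2)"
    by (simp add: norm_mat_sq inner_mat sum_subtractf sum_divide_distrib)
  also have "\<dots> \<le> (\<Sum>i\<in>UNIV. \<Sum>j\<in>UNIV. (max 0 (W$i$j))\<^sup>2 / 2)"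
    apply (intro sum_mono)
    subgoal for i j using fenchel[OF assms, of i j "W$i$j"] by simp
    done
  also have "\<dots> = (norm (projC W))\<^sup>2 / 2"
    by (simp add: norm_mat_sq projC_def sum_divide_distrib)
  finally show ?thesis .
qed

lemma phi_descent:
  "phi G (y + t *\<^sub>R d) \<le> phi G y + t * inner (grad_phi G y) d + t\<^sup>2 / 2 * (norm (Bstar d))\<^sup>2"
proof -
  define W where "W = Bstar y + G"
  have e: "Bstar (y + t *\<^sub>R d) + G = W + t *\<^sub>R Bstar d"
    by (simp add: W_def Bstar_add Bstar_scale algebra_simps)
  have "(norm (projC (W + t *\<^sub>R Bstar d)))\<^sup>2 / 2
      \<le> (norm (projC W))\<^sup>2 / 2 + inner (projC W) (t *\<^sub>R Bstar d) + (norm (t *\<^sub>R Bstar d))\<^sup>2 / 2"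
    by (rule projC_upper)
  also have "inner (projC W) (t *\<^sub>R Bstar d) = t * inner (Bop (projC W)) d"
    by (simp add: inner_Bop)
  also have "(norm (t *\<^sub>R Bstar d))\<^sup>2 / 2 = t\<^sup>2 / 2 * (norm (Bstar d))\<^sup>2"
    by (simp add: power_mult_distrib)
  finally have *: "(norm (projC (W + t *\<^sub>R Bstar d)))\<^sup>2 / 2
      \<le> (norm (projC W))\<^sup>2 / 2 + t * inner (Bop (projC W)) d + t\<^sup>2 / 2 * (norm (Bstar d))\<^sup>2" .
  show ?thesis
    unfolding phi_def e grad_phi_def W_def[symmetric]
    using * by (simp add: inner_add_right inner_diff_left algebra_simps)
qed

lemma phi_convex:
  "phi G y + inner (grad_phi G y) (z - y) \<le> phi G z"
proof -
  define W where "W = Bstar y + G"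
  have e: "Bstar z + G = W + Bstar (z - y)"
    by (simp add: W_def linear_diff[OF linear_Bstar] algebra_simps)
  have *: "(norm (projC W))\<^sup>2 / 2 + inner (Bop (projC W)) (z - y) \<le> (norm (projC (W + Bstar (z - y))))\<^sup>2 / 2"
    using projC_lower[of W "Bstar (z - y)"] by (simp add: inner_Bop)
  show ?thesis
    unfolding phi_def e grad_phi_def W_def[symmetric]
    using * by (simp add: inner_diff_right inner_diff_left algebra_simps)
qed



lemma bl_Bop: "bounded_linear (Bop :: real^'n^'n \<Rightarrow> _)"
  using linear_Bop linear_conv_bounded_linear by blast
lemma bl_Bstar: "bounded_linear (Bstar :: (real^'n)\<times>(real^'n) \<Rightarrow> _)"
  using linear_Bstar linear_conv_bounded_linear by blast

lemma entry_le_norm: "\<bar>X$i$j\<bar> \<le> norm (X::real^'n^'m)"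
  using component_le_norm_cart[of "X$i" j] Finite_Cartesian_Product.norm_nth_le[of X i] by linarith

definition Zop :: "(real^'n)\<times>(real^'n) \<Rightarrow> real^'n^'n" where
  "Zop u = (\<chi> i j. fst u $ i / real CARD('n) + snd u $ j / real CARD('n)
              - (\<Sum>k\<in>UNIV. fst u $ k) / (real CARD('n) * real CARD('n)))"

definition Jmat :: "real^'n^'n" where "Jmat = (\<chi> i j. 1 / real CARD('n))"

lemma linear_Zop: "linear Zop"
  by (rule linearI)
     (simp_all add: Zop_def vec_eq_iff sum.distrib sum_distrib_left add_divide_distrib
        diff_divide_distrib algebra_simps)

lemma RanB_sums: "u \<in> RanB \<Longrightarrow> (\<Sum>k\<in>UNIV. fst u $ k) = (\<Sum>k\<in>UNIV. snd u $ k)"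
  unfolding RanB_def Bop_def
  by (auto simp: matrix_vector_mult_def transpose_def ones_def intro: sum.swap)

lemma Bop_Zop: fixes u :: "(real^'n)\<times>(real^'n)" assumes "u \<in> RanB" shows "Bop (Zop u) = u"
proof -
  obtain a c where u: "u = (a, c)" by (cases u)
  define n where "n = real CARD('n)"
  have "0 < CARD('n)" by (rule finite_UNIV_card_ge_0) simp
  then have n0: "n \<noteq> 0" by (simp add: n_def)
  have S: "(\<Sum>k\<in>UNIV. a $ k) = (\<Sum>k\<in>UNIV. c $ k)" using RanB_sums[OF assms] u by simp
  have r: "(Zop u *v ones) $ i = a $ i" for i
  proof -
    have "(Zop u *v ones) $ i = (\<Sum>j\<in>UNIV. a $ i / n + c $ j / n - (\<Sum>k\<in>UNIV. a $ k) / (n * n))"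
      by (simp add: Zop_def u matrix_vector_mult_def ones_def n_def)
    also have "\<dots> = n * (a $ i / n) + (\<Sum>j\<in>UNIV. c $ j) / n - n * ((\<Sum>k\<in>UNIV. a $ k) / (n * n))"
      by (simp add: sum.distrib sum_subtractf sum_divide_distrib n_def)
    also have "\<dots> = a $ i"
    proof -
      have "n * (a $ i / n) = a $ i" using n0 by simp
      moreover have "n * ((\<Sum>k\<in>UNIV. a $ k) / (n * n)) = (\<Sum>k\<in>UNIV. c $ k) / n"
        using n0 S by simp
      ultimately show ?thesis by simp
    qed
    finally show ?thesis .
  qed
  have c: "(transpose (Zop u) *v ones) $ j = c $ j" for j
  proof -
    have "(transpose (Zop u) *v ones) $ j = (\<Sum>i\<in>UNIV. a $ i / n + c $ j / n - (\<Sum>k\<in>UNIV. a $ k) / (n * n))"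
      by (simp add: Zop_def u matrix_vector_mult_def transpose_def ones_def n_def)
    also have "\<dots> = (\<Sum>i\<in>UNIV. a $ i) / n + n * (c $ j / n) - n * ((\<Sum>k\<in>UNIV. a $ k) / (n * n))"
      by (simp add: sum.distrib sum_subtractf sum_divide_distrib n_def)
    also have "\<dots> = c $ j"
    proof -
      have "n * (c $ j / n) = c $ j" using n0 by simp
      moreover have "n * ((\<Sum>k\<in>UNIV. a $ k) / (n * n)) = (\<Sum>k\<in>UNIV. a $ k) / n"
        using n0 by simp
      ultimately show ?thesis by simp
    qed
    finally show ?thesis .
  qed
  show ?thesis using r c by (simp add: Bop_def u vec_eq_iff)
qed

lemma Bop_Jmat: "Bop Jmat = bvec"
  by (simp add: Bop_def Jmat_def bvec_def ones_def matrix_vector_mult_def transpose_def vec_eq_iff)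

lemma phi_coercive: "\<exists>c1>0. \<exists>c2. \<forall>y\<in>RanB. c1 * norm y - c2 \<le> phi G (y :: (real^'n)\<times>(real^'n))"
proof -
  define n where "n = real CARD('n)"
  have n0: "n > 0" using finite_UNIV_card_ge_0[OF finite_class.finite_UNIV] by (simp add: n_def)
  have "bounded_linear (Zop :: _ \<Rightarrow> real^'n^'n)"
    using linear_Zop linear_conv_bounded_linear by blast
  then obtain KZ where KZ: "KZ > 0" "\<And>u. norm (Zop u :: real^'n^'n) \<le> norm u * KZ"
    using bounded_linear.pos_bounded by blast
  define M where "M = norm (Jmat :: real^'n^'n) + 1 / n"
  have M0: "M \<ge> 0" using n0 by (simp add: M_def)
  define c1 where "c1 = 1 / (n * KZ)"
  define c2 where "c2 = M * norm G + M\<^sup>2 / 2 + (norm G)\<^sup>2 / 2"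
  have "c1 * norm y - c2 \<le> phi G y" if yR: "y \<in> RanB" for y
  proof (cases "y = 0")
    case True
    have nn: "0 \<le> M * norm G + M\<^sup>2 / 2" using M0 by simp
    have eq: "phi G y = (norm (projC (Bstar y + G)))\<^sup>2/2 - (norm G)\<^sup>2/2" using True by (simp add: phi_def)
    have z: "0 \<le> (norm (projC (Bstar y + G)))\<^sup>2/2" by simp
    have "- c2 \<le> phi G y" unfolding c2_def using eq z nn by linarith
    then show ?thesis using True by simp
  next
    case False
    define N where "N = norm y"
    have N0: "N > 0" using False by (simp add: N_def)
    define t where "t = 1 / (n * KZ * N)"
    have t0: "t > 0" using n0 KZ N0 by (simp add: t_def)
    define X where "X = Jmat + t *\<^sub>R Zop y"
    have tZ: "t * norm (Zop y) \<le> 1 / n"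
    proof -
      have "t * norm (Zop y) \<le> t * (N * KZ)" using KZ(2)[of y] t0 by (simp add: N_def)
      also have "\<dots> = 1 / n" using n0 KZ N0 by (simp add: t_def)
      finally show ?thesis .
    qed
    have Xpos: "0 \<le> X$i$j" for i j
    proof -
      have "t * \<bar>Zop y $i$j\<bar> \<le> t * norm (Zop y)" using t0 entry_le_norm by simp
      moreover have "- (t * Zop y $i$j) \<le> t * \<bar>Zop y $i$j\<bar>"
        using mult_left_mono[OF abs_ge_minus_self[of "Zop y $i$j"], of t] t0 by simp
      ultimately have "- (t * Zop y $i$j) \<le> 1 / n" using tZ by linarith
      then show ?thesis by (simp add: X_def Jmat_def n_def)
    qed
    have normX: "norm X \<le> M"
    proof -
      have "norm X \<le> norm (Jmat :: real^'n^'n) + norm (t *\<^sub>R Zop y)" unfolding X_def by (rule norm_triangle_ineq)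
      also have "norm (t *\<^sub>R Zop y) = t * norm (Zop y)" using t0 by simp
      finally show ?thesis using tZ by (simp add: M_def)
    qed
    have BX: "Bop X = bvec + t *\<^sub>R y"
      by (simp add: X_def Bop_add Bop_scale Bop_Jmat Bop_Zop[OF yR])
    have fen: "inner X (Bstar y + G) - (norm X)\<^sup>2 / 2 \<le> (norm (projC (Bstar y + G)))\<^sup>2 / 2"
      by (rule projC_fenchel[OF Xpos])
    have "inner X (Bstar y + G) = inner bvec y + t * N\<^sup>2 + inner X G"
      by (simp add: inner_add_right inner_Bop[symmetric] BX inner_add_left N_def power2_norm_eq_inner)
    moreover have "t * N\<^sup>2 = c1 * N" using N0 n0 KZ by (simp add: t_def c1_def power2_eq_square)
    moreover have "- (M * norm G) \<le> inner X G"
    proof -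
      have "- inner X G = inner X (- G)" by simp
      also have "\<dots> \<le> norm X * norm (- G)" by (rule norm_cauchy_schwarz)
      also have "\<dots> \<le> M * norm G" using normX by (simp add: mult_right_mono)
      finally show ?thesis by linarith
    qed
    moreover have "(norm X)\<^sup>2 \<le> M\<^sup>2" using normX by (simp add: power_mono)
    ultimately show ?thesis using fen unfolding phi_def c2_def N_def by (simp add: algebra_simps)
  qed
  moreover have "c1 > 0" using n0 KZ by (simp add: c1_def)
  ultimately show ?thesis by blast
qed

lemma grad_lipschitz: fixes G :: "real^'n^'n" shows "\<exists>L\<ge>0. \<forall>y z. norm (grad_phi G y - grad_phi G z) \<le> L * norm (y - z)"
proof -
  obtain KB where KB: "KB > 0" "\<And>X. norm (Bop X :: (real^'n)\<times>(real^'n)) \<le> norm X * KB"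
    using bounded_linear.pos_bounded[OF bl_Bop] by blast
  obtain KS where KS: "KS > 0" "\<And>y. norm (Bstar y :: real^'n^'n) \<le> norm y * KS"
    using bounded_linear.pos_bounded[OF bl_Bstar] by blast
  have "norm (grad_phi G y - grad_phi G z) \<le> (KB * KS) * norm (y - z)" for y z
  proof -
    have "grad_phi G y - grad_phi G z = Bop (projC (Bstar y + G) - projC (Bstar z + G))"
      by (simp add: grad_phi_def linear_diff[OF linear_Bop])
    then have "norm (grad_phi G y - grad_phi G z) \<le> norm (projC (Bstar y + G) - projC (Bstar z + G)) * KB"
      using KB(2)[of "projC (Bstar y + G) - projC (Bstar z + G)"] by simp
    also have "\<dots> \<le> norm (Bstar y + G - (Bstar z + G)) * KB"
      by (rule mult_right_mono[OF norm_projC_diff]) (use KB(1) in simp)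
    also have "Bstar y + G - (Bstar z + G) = Bstar (y - z)" by (simp add: linear_diff[OF linear_Bstar])
    also have "norm (Bstar (y - z)) * KB \<le> norm (y - z) * KS * KB"
      using KS(2) KB(1) by (simp add: mult_right_mono)
    finally show ?thesis by (simp add: algebra_simps)
  qed
  moreover have "KB * KS \<ge> 0" using KB KS by simp
  ultimately show ?thesis by blast
qed

lemma grad_cont: "isCont (grad_phi G) y"
proof -
  obtain L where L: "\<And>y z. norm (grad_phi G y - grad_phi G z) \<le> L * norm (y - z)" and L0: "L \<ge> 0"
    using grad_lipschitz by blast
  have "L-lipschitz_on UNIV (grad_phi G)"
    by (rule lipschitz_onI) (simp_all only: dist_norm L L0)
  then have "continuous_on UNIV (grad_phi G)"
    by (rule lipschitz_on_continuous_on)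
  then have "\<forall>x\<in>UNIV. isCont (grad_phi G) x"
    by (simp only: continuous_on_eq_continuous_at[OF open_UNIV])
  then show ?thesis by blast
qed



theorem theorem3p2:
  fixes G :: "real ^ 'n ^ 'n"
    and y d :: "nat \<Rightarrow> (real ^ 'n) \<times> (real ^ 'n)"
    and \<mu> \<eta> \<tau>1 \<tau>2 \<tau> \<delta> :: real
  assumes "0 < \<mu>" "\<mu> < 1/2" "0 < \<eta>" "\<eta> < 1"
    and "0 < \<tau>1" "\<tau>1 < 1" "0 < \<tau>2" "\<tau>2 < 1"
    and "0 < \<tau>" "\<tau> \<le> 1" "0 < \<delta>" "\<delta> < 1"
    and "y 0 \<in> RanB"
    and cg_step: "\<And>j. \<exists>k.
        (let A = (\<lambda>v. Vop (Bstar (y j) + G) v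
                      + (\<tau>1 * min \<tau>2 (norm (grad_phi G (y j)))) *\<^sub>R v)
         in d j = cg_iterate A (grad_phi G (y j)) k
            \<and> norm (A (d j) + grad_phi G (y j))
                \<le> min \<eta> (norm (grad_phi G (y j)) powr (1 + \<tau>)))"
    and ls_step: "\<And>j. y (Suc j) = y j +
        (\<delta> ^ (LEAST m. phi G (y j + (\<delta> ^ m) *\<^sub>R d j)
                 \<le> phi G (y j) + \<mu> * \<delta> ^ m * inner (grad_phi G (y j)) (d j))) *\<^sub>R d j"
  shows "range y \<subseteq> RanB \<and> bounded (range y) \<and>
         (\<forall>yh. yh \<in> RanB \<and> (\<exists>s. strict_mono s \<and> (y \<circ> s) \<longlonglongrightarrow> yh) \<longrightarrow> optimal G yh)"
proof -
  note prm = assms(1-12)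
  define g where "g j = grad_phi G (y j)" for j
  define e where "e j = \<tau>1 * min \<tau>2 (norm (g j))" for j
  define AA where "AA j = (\<lambda>v. Vop (Bstar (y j) + G) v + e j *\<^sub>R v)" for j
  define P where "P j m \<longleftrightarrow> phi G (y j + (\<delta> ^ m) *\<^sub>R d j) \<le> phi G (y j) + \<mu> * \<delta> ^ m * inner (g j) (d j)" for j m
  define \<alpha> where "\<alpha> j = \<delta> ^ (LEAST m. P j m)" for j
  have ystep: "y (Suc j) = y j + \<alpha> j *\<^sub>R d j" for j
    using ls_step[of j] by (simp add: \<alpha>_def P_def g_def)
  have cgj: "\<exists>k. d j = cg_iterate (AA j) (g j) k \<and> norm (AA j (d j) + g j) \<le> min \<eta> (norm (g j) powr (1 + \<tau>))" for j
    using cg_step[of j] by (simp add: Let_def AA_def e_def g_def)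
  obtain KB where KB: "KB > 0" "\<And>X. norm (Bop X :: (real^'n)\<times>(real^'n)) \<le> norm X * KB"
    using bounded_linear.pos_bounded[OF bl_Bop] by blast
  obtain KS where KS: "KS > 0" "\<And>v. norm (Bstar v :: real^'n^'n) \<le> norm v * KS"
    using bounded_linear.pos_bounded[OF bl_Bstar] by blast
  define Kb where "Kb = KS\<^sup>2"
  have Kb0: "Kb > 0" using KS by (simp add: Kb_def)
  have KbB: "(norm (Bstar v :: real^'n^'n))\<^sup>2 \<le> Kb * (norm v)\<^sup>2" for v
  proof -
    have "(norm (Bstar v :: real^'n^'n))\<^sup>2 \<le> (norm v * KS)\<^sup>2"
      using KS(2)[of v] by (simp add: power_mono)
    then show ?thesis by (simp add: Kb_def power_mult_distrib mult.commute)
  qed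
  have Vbound: "norm (Vop X v) \<le> norm v * (KS * KB)" for X :: "real^'n^'n" and v
  proof -
    have "norm (Vop X v) \<le> norm (Uop X (Bstar v)) * KB" unfolding Vop_def by (rule KB(2))
    also have "\<dots> \<le> norm (Bstar v) * KB" using norm_Uop KB(1) by (simp add: mult_right_mono)
    also have "\<dots> \<le> (norm v * KS) * KB" using KS(2) KB(1) by (simp add: mult_right_mono)
    finally show ?thesis by (simp add: algebra_simps)
  qed
  have e0: "0 \<le> e j" for j using prm by (simp add: e_def)
  have e1: "e j \<le> 1" for j
  proof -
    have "min \<tau>2 (norm (g j)) \<le> 1" using prm by linarith
    then have "\<tau>1 * min \<tau>2 (norm (g j)) \<le> \<tau>1 * 1"
      using prm by (intro mult_left_mono) auto
    then show ?thesis using prm unfolding e_def by linarith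
  qed
  have gR: "g j \<in> RanB" for j by (simp add: g_def grad_RanB)
  have AA_add: "AA j (u + v) = AA j u + AA j v" for j u v
    by (simp add: AA_def Vop_add algebra_simps)
  have AA_scl: "AA j (c *\<^sub>R u) = c *\<^sub>R AA j u" for j c u
    by (simp add: AA_def Vop_scale algebra_simps)
  have AA0: "AA j 0 = 0" for j using AA_scl[of j 0 0] by simp
  have AA_sym: "inner u (AA j v) = inner (AA j u) v" for j u v
    by (simp add: AA_def inner_add_right inner_add_left Vop_sym)
  have AA_quad: "e j * (norm v)\<^sup>2 \<le> inner v (AA j v)" for j v
    using Vop_psd[of v "Bstar (y j) + G"]
    by (simp add: AA_def inner_add_right power2_norm_eq_inner)
  have dR: "d j \<in> RanB" for j
  proof -
    obtain k where k: "d j = cg_iterate (AA j) (g j) k" using cgj[of j] by blast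
    have "case cg (AA j) (g j) k of (x, r, p) \<Rightarrow> x \<in> RanB \<and> r \<in> RanB \<and> p \<in> RanB"
      by (rule cg_sub[OF RanB_subspace _ gR])
         (simp add: AA_def subspace_add[OF RanB_subspace] subspace_mul[OF RanB_subspace] Vop_RanB)
    then show ?thesis using k by (simp add: cg_iterate_def split: prod.splits)
  qed
  have gd: "e j * (norm (d j))\<^sup>2 \<le> - 2 * inner (g j) (d j)" for j
  proof (cases "g j = 0")
    case True
    obtain k where k: "d j = cg_iterate (AA j) (g j) k" using cgj[of j] by blast
    have "d j = 0" using k True cg_zero[of "AA j", OF AA0] by (simp add: cg_iterate_def)
    then show ?thesis by simp
  next
    case False
    have ej: "e j > 0" using False prm by (simp add: e_def)
    obtain k where k: "d j = cg_iterate (AA j) (g j) k" using cgj[of j] by blast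
    have pd: "0 < inner v (AA j v)" if "v \<noteq> 0" for v
    proof -
      have "0 < e j * (norm v)\<^sup>2" using ej that by simp
      then show ?thesis using AA_quad[of j v] by linarith
    qed
    have "case cg (AA j) (g j) k of (x, r, p) \<Rightarrow>
           r = - g j - AA j x \<and> inner r p = inner r r \<and> inner x (AA j x) / 2 + inner (g j) x \<le> 0"
      by (rule cg_inv[OF AA_add AA_scl AA_sym pd])
    then have "inner (d j) (AA j (d j)) / 2 + inner (g j) (d j) \<le> 0"
      using k by (simp add: cg_iterate_def split: prod.splits)
    then show ?thesis using AA_quad[of j "d j"] by linarith
  qed
  have gd0: "inner (g j) (d j) \<le> 0" for j
  proof -
    have "0 \<le> e j * (norm (d j))\<^sup>2" using e0[of j] by simp
    then show ?thesis using gd[of j] by linarith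
  qed
  have armijo: "phi G (y j + t *\<^sub>R d j) \<le> phi G (y j) + \<mu> * t * inner (g j) (d j)"
    if t0: "0 \<le> t" and tK: "t * Kb \<le> (1 - \<mu>) * e j" for j t
  proof -
    define D where "D = (norm (d j))\<^sup>2"
    define q where "q = inner (g j) (d j)"
    have D0: "0 \<le> D" by (simp add: D_def)
    have qD: "e j * D \<le> - 2 * q" using gd[of j] by (simp add: q_def D_def)
    have c1: "phi G (y j + t *\<^sub>R d j) \<le> phi G (y j) + t * q + t\<^sup>2 / 2 * (norm (Bstar (d j)))\<^sup>2"
      using phi_descent[of G "y j" t "d j"] by (simp add: q_def g_def)
    have c2: "t\<^sup>2 / 2 * (norm (Bstar (d j)))\<^sup>2 \<le> t\<^sup>2 / 2 * (Kb * D)"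
      using KbB[of "d j"] by (simp add: D_def mult_left_mono)
    have c3: "t\<^sup>2 / 2 * (Kb * D) = (t * D / 2) * (t * Kb)" by (simp add: power2_eq_square algebra_simps)
    have tD: "0 \<le> t * D / 2" using t0 D0 by simp
    have c4: "(t * D / 2) * (t * Kb) \<le> (t * D / 2) * ((1 - \<mu>) * e j)"
      by (rule mult_left_mono[OF tK tD])
    have c5: "(t * (1 - \<mu>) / 2) * (e j * D) \<le> (t * (1 - \<mu>) / 2) * (- 2 * q)"
      by (rule mult_left_mono[OF qD]) (use t0 prm in simp)
    have c6: "(t * D / 2) * ((1 - \<mu>) * e j) = (t * (1 - \<mu>) / 2) * (e j * D)" by (simp add: algebra_simps)
    have c7: "(t * (1 - \<mu>) / 2) * (- 2 * q) = \<mu> * t * q - t * q" by (simp add: field_simps)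
    have "phi G (y j + t *\<^sub>R d j) \<le> phi G (y j) + \<mu> * t * q"
      using c1 c2 c3 c4 c5 c6 c7 by linarith
    then show ?thesis by (simp add: q_def)
  qed
  have Pex: "\<exists>m. P j m" for j
  proof (cases "g j = 0")
    case True
    obtain k where k: "d j = cg_iterate (AA j) (g j) k" using cgj[of j] by blast
    have "d j = 0" using k True cg_zero[of "AA j", OF AA0] by (simp add: cg_iterate_def)
    then have "P j 0" by (simp add: P_def)
    then show ?thesis by blast
  next
    case False
    have ej: "e j > 0" using False prm by (simp add: e_def)
    have "0 < (1 - \<mu>) * e j / Kb" using ej Kb0 prm by simp
    then obtain m where m: "\<delta> ^ m < (1 - \<mu>) * e j / Kb"
      using real_arch_pow_inv prm by blast
    then have "\<delta> ^ m * Kb \<le> (1 - \<mu>) * e j" using Kb0 by (simp add: pos_less_divide_eq less_imp_le)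
    then have "P j m" using armijo[where j=j and t="\<delta> ^ m"] prm by (simp add: P_def)
    then show ?thesis by blast
  qed
  have Palpha: "P j (LEAST m. P j m)" for j using Pex[of j] by (rule LeastI_ex)
  have alpha_pos: "0 < \<alpha> j" for j using prm by (simp add: \<alpha>_def)
  have phi_step: "phi G (y (Suc j)) \<le> phi G (y j) + \<mu> * \<alpha> j * inner (g j) (d j)" for j
    using Palpha[of j] by (simp add: P_def ystep \<alpha>_def)
  have phi_dec: "phi G (y (Suc j)) \<le> phi G (y j)" for j
  proof -
    have "0 \<le> \<mu> * \<alpha> j" using prm alpha_pos[of j] by simp
    then have "\<mu> * \<alpha> j * inner (g j) (d j) \<le> 0" using gd0[of j] by (simp add: mult_nonneg_nonpos)
    then show ?thesis using phi_step[of j] by linarith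
  qed
  have alpha_lb: "\<alpha> j \<ge> min 1 (\<delta> * ((1 - \<mu>) * ee / Kb))" if ee: "0 < ee" "ee \<le> e j" for j ee
  proof (cases "(LEAST m. P j m) = 0")
    case True
    then show ?thesis by (simp add: \<alpha>_def)
  next
    case False
    then obtain m' where m': "(LEAST m. P j m) = Suc m'" by (cases "LEAST m. P j m") auto
    have "\<not> P j m'" using not_less_Least[of m' "P j"] m' by simp
    then have "\<not> (\<delta> ^ m' * Kb \<le> (1 - \<mu>) * e j)"
      using armijo[where j=j and t="\<delta> ^ m'"] prm by (auto simp: P_def)
    then have "(1 - \<mu>) * e j / Kb < \<delta> ^ m'" using Kb0 by (simp add: pos_divide_less_eq)
    moreover have "(1 - \<mu>) * ee / Kb \<le> (1 - \<mu>) * e j / Kb"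
      by (intro divide_right_mono mult_left_mono) (use ee Kb0 prm in auto)
    ultimately have "(1 - \<mu>) * ee / Kb \<le> \<delta> ^ m'" by linarith
    then have "\<delta> * ((1 - \<mu>) * ee / Kb) \<le> \<delta> * \<delta> ^ m'" by (rule mult_left_mono) (use prm in auto)
    then show ?thesis using m' by (simp add: \<alpha>_def)
  qed
  have yR: "y j \<in> RanB" for j
  proof (induction j)
    case 0 then show ?case using assms(13) by simp
  next
    case (Suc j)
    then show ?case using dR[of j]
      by (simp add: ystep subspace_add[OF RanB_subspace] subspace_mul[OF RanB_subspace])
  qed
  obtain c1 c2 where c1: "c1 > 0" and c2: "\<And>z. z \<in> RanB \<Longrightarrow> c1 * norm z - c2 \<le> phi G z"
    using phi_coercive[of G] by blast
  have phi_le0: "phi G (y j) \<le> phi G (y 0)" for j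
  proof (induction j)
    case (Suc j) then show ?case using phi_dec[of j] by linarith
  qed simp
  have ybd: "norm (y j) \<le> (phi G (y 0) + c2) / c1" for j
  proof -
    have "c1 * norm (y j) \<le> phi G (y 0) + c2" using c2[OF yR[of j]] phi_le0[of j] by linarith
    then show ?thesis using c1 by (simp add: pos_le_divide_eq mult.commute)
  qed
  have phi_lb: "- c2 \<le> phi G (y j)" for j
  proof -
    have "0 \<le> c1 * norm (y j)" using c1 by simp
    then show ?thesis using c2[OF yR[of j]] by linarith
  qed
  have opt: "optimal G yh" if yhR: "yh \<in> RanB" and s: "strict_mono s" and ys: "(y \<circ> s) \<longlonglongrightarrow> yh" for yh s
  proof -
    have gh0: "grad_phi G yh = 0"
    proof (rule ccontr)
      assume ne: "grad_phi G yh \<noteq> 0"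
      define gh where "gh = grad_phi G yh"
      define \<gamma> where "\<gamma> = norm gh"
      have \<gamma>0: "\<gamma> > 0" using ne by (simp add: \<gamma>_def gh_def)
      have ys': "(\<lambda>k. y (s k)) \<longlonglongrightarrow> yh" using ys by (simp add: o_def)
      have gs: "(\<lambda>k. g (s k)) \<longlonglongrightarrow> gh"
        unfolding g_def gh_def by (rule isCont_tendsto_compose[OF grad_cont ys'])
      have ngs: "(\<lambda>k. norm (g (s k))) \<longlonglongrightarrow> \<gamma>" unfolding \<gamma>_def by (rule tendsto_norm[OF gs])
      have ev1: "\<forall>\<^sub>F k in sequentially. \<gamma> / 2 < norm (g (s k))"
        by (rule order_tendstoD(1)[OF ngs]) (use \<gamma>0 in simp)
      define ee where "ee = \<tau>1 * min \<tau>2 (\<gamma> / 2)"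
      have ee0: "ee > 0" using prm \<gamma>0 by (simp add: ee_def)
      define \<kappa> where "\<kappa> = min 1 (\<delta> * ((1 - \<mu>) * ee / Kb))"
      have \<kappa>0: "\<kappa> > 0" using prm ee0 Kb0 by (simp add: \<kappa>_def)
      have ev2: "\<forall>\<^sub>F k in sequentially. ee \<le> e (s k)"
        using ev1
      proof (rule eventually_mono)
        fix k assume "\<gamma> / 2 < norm (g (s k))"
        then have "min \<tau>2 (\<gamma> / 2) \<le> min \<tau>2 (norm (g (s k)))" by simp
        then show "ee \<le> e (s k)" unfolding ee_def e_def by (rule mult_left_mono) (use prm in simp)
      qed
      define \<Phi> where "\<Phi> j = phi G (y j)" for j
      have "decseq \<Phi>" unfolding decseq_Suc_iff \<Phi>_def using phi_dec by blast
      moreover have lb: "\<forall>i. - c2 \<le> \<Phi> i" using phi_lb by (simp add: \<Phi>_def)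
      ultimately obtain L where L: "\<Phi> \<longlonglongrightarrow> L" "\<forall>i. L \<le> \<Phi> i"
        by (rule decseq_convergent)
      have "(\<lambda>j. \<Phi> j - \<Phi> (Suc j)) \<longlonglongrightarrow> L - L"
        by (intro tendsto_diff L(1) LIMSEQ_Suc[OF L(1)])
      then have "(\<lambda>j. \<Phi> j - \<Phi> (Suc j)) \<longlonglongrightarrow> 0" by simp
      from LIMSEQ_subseq_LIMSEQ[OF this s]
      have D0: "(\<lambda>k. \<Phi> (s k) - \<Phi> (Suc (s k))) \<longlonglongrightarrow> 0" by (simp add: o_def)
      have Dlim: "(\<lambda>k. (\<Phi> (s k) - \<Phi> (Suc (s k))) / (\<mu> * \<kappa>)) \<longlonglongrightarrow> 0"
        by (rule tendsto_divide_zero[OF D0])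
      define Q where "Q k = - inner (g (s k)) (d (s k))" for k
      have Q0: "0 \<le> Q k" for k using gd0[of "s k"] by (simp add: Q_def)
      have ev3: "\<forall>\<^sub>F k in sequentially. Q k \<le> (\<Phi> (s k) - \<Phi> (Suc (s k))) / (\<mu> * \<kappa>)"
        using ev2
      proof (rule eventually_mono)
        fix k assume eek: "ee \<le> e (s k)"
        have ak: "\<kappa> \<le> \<alpha> (s k)" using alpha_lb[OF ee0 eek] by (simp add: \<kappa>_def)
        have "\<mu> * \<kappa> \<le> \<mu> * \<alpha> (s k)" by (rule mult_left_mono[OF ak]) (use prm in simp)
        then have "\<mu> * \<kappa> * Q k \<le> \<mu> * \<alpha> (s k) * Q k" by (rule mult_right_mono[OF _ Q0])
        also have "\<dots> \<le> \<Phi> (s k) - \<Phi> (Suc (s k))"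
          using phi_step[of "s k"] by (simp add: Q_def \<Phi>_def)
        finally have "\<mu> * \<kappa> * Q k \<le> \<Phi> (s k) - \<Phi> (Suc (s k))" .
        moreover have "0 < \<mu> * \<kappa>" using prm \<kappa>0 by simp
        ultimately show "Q k \<le> (\<Phi> (s k) - \<Phi> (Suc (s k))) / (\<mu> * \<kappa>)"
          by (simp add: pos_le_divide_eq mult.commute)
      qed
      have Qlim: "Q \<longlonglongrightarrow> 0"
        by (rule tendsto_sandwich[OF _ ev3 tendsto_const Dlim]) (simp add: Q0)
      define Dn where "Dn k = (norm (d (s k)))\<^sup>2" for k
      have ev4: "\<forall>\<^sub>F k in sequentially. Dn k \<le> (2 * Q k) / ee"
        using ev2
      proof (rule eventually_mono)
        fix k assume eek: "ee \<le> e (s k)"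
        have "ee * Dn k \<le> e (s k) * Dn k" by (rule mult_right_mono[OF eek]) (simp add: Dn_def)
        also have "\<dots> \<le> 2 * Q k" using gd[of "s k"] by (simp add: Q_def Dn_def)
        finally have "Dn k * ee \<le> 2 * Q k" by (simp add: mult.commute)
        then show "Dn k \<le> (2 * Q k) / ee" using ee0 by (simp add: pos_le_divide_eq)
      qed
      have "(\<lambda>k. 2 * Q k) \<longlonglongrightarrow> 0" by (rule tendsto_mult_right_zero[OF Qlim])
      then have Qlim2: "(\<lambda>k. (2 * Q k) / ee) \<longlonglongrightarrow> 0" by (rule tendsto_divide_zero)
      have Dlim2: "Dn \<longlonglongrightarrow> 0"
        by (rule tendsto_sandwich[OF _ ev4 tendsto_const Qlim2]) (simp add: Dn_def)
      have "(\<lambda>k. sqrt (Dn k)) \<longlonglongrightarrow> sqrt 0" by (rule tendsto_real_sqrt[OF Dlim2])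
      then have ndlim: "(\<lambda>k. norm (d (s k))) \<longlonglongrightarrow> 0" by (simp add: Dn_def)
      have Adlim: "(\<lambda>k. AA (s k) (d (s k))) \<longlonglongrightarrow> 0"
      proof (rule Lim_null_comparison)
        show "\<forall>\<^sub>F k in sequentially. norm (AA (s k) (d (s k))) \<le> norm (d (s k)) * (KS * KB + 1)"
        proof (rule always_eventually, rule allI)
          fix k
          have n1: "norm (AA (s k) (d (s k))) \<le> norm (Vop (Bstar (y (s k)) + G) (d (s k))) + norm (e (s k) *\<^sub>R d (s k))"
            unfolding AA_def by (rule norm_triangle_ineq)
          have n2: "norm (e (s k) *\<^sub>R d (s k)) \<le> norm (d (s k))"
            using e0[of "s k"] e1[of "s k"] by (simp add: mult_left_le_one_le)
          have n3: "norm (Vop (Bstar (y (s k)) + G) (d (s k))) \<le> norm (d (s k)) * (KS * KB)"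
            by (rule Vbound)
          have n4: "norm (d (s k)) * (KS * KB + 1) = norm (d (s k)) * (KS * KB) + norm (d (s k))"
            by (simp add: algebra_simps)
          show "norm (AA (s k) (d (s k))) \<le> norm (d (s k)) * (KS * KB + 1)"
            using n1 n2 n3 n4 by linarith
        qed
        show "(\<lambda>k. norm (d (s k)) * (KS * KB + 1)) \<longlonglongrightarrow> 0"
          by (rule tendsto_mult_left_zero[OF ndlim])
      qed
      have Rlim: "(\<lambda>k. norm (AA (s k) (d (s k)) + g (s k))) \<longlonglongrightarrow> \<gamma>"
        using tendsto_norm[OF tendsto_add[OF Adlim gs]] by (simp add: \<gamma>_def)
      have Rb: "norm (AA j (d j) + g j) \<le> min \<eta> (norm (g j) powr (1 + \<tau>))" for j
        using cgj[of j] by blast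
      have Rb1: "norm (AA j (d j) + g j) \<le> \<eta>" for j using Rb[of j] by simp
      have Rb2: "norm (AA j (d j) + g j) \<le> norm (g j) powr (1 + \<tau>)" for j using Rb[of j] by simp
      have "\<gamma> \<le> \<eta>"
        by (rule LIMSEQ_le_const2[OF Rlim]) (use Rb1 in blast)
      have powlim: "(\<lambda>k. norm (g (s k)) powr (1 + \<tau>)) \<longlonglongrightarrow> \<gamma> powr (1 + \<tau>)"
        by (rule tendsto_powr[OF ngs tendsto_const]) (use \<gamma>0 in simp)
      have "\<gamma> \<le> \<gamma> powr (1 + \<tau>)"
        by (rule LIMSEQ_le[OF Rlim powlim]) (use Rb2 in blast)
      moreover have "\<gamma> powr (1 + \<tau>) = \<gamma> * \<gamma> powr \<tau>"
        using \<gamma>0 by (simp add: powr_add)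
      moreover have "\<gamma> powr \<tau> < 1"
      proof -
        have "\<gamma> powr \<tau> < 1 powr \<tau>"
          using \<open>\<gamma> \<le> \<eta>\<close> prm \<gamma>0 by (intro powr_less_mono2) auto
        then show ?thesis by simp
      qed
      moreover have "\<gamma> * \<gamma> powr \<tau> < \<gamma> * 1"
        by (rule mult_strict_left_mono[OF \<open>\<gamma> powr \<tau> < 1\<close> \<gamma>0])
      ultimately show False by linarith
    qed
    have "phi G yh \<le> phi G z" for z
      using phi_convex[of G yh z] gh0 by simp
    then show ?thesis using yhR by (simp add: optimal_def)
  qed
  show ?thesis
  proof (intro conjI)
    show "range y \<subseteq> RanB" using yR by auto
    show "bounded (range y)" unfolding bounded_iff using ybd by blast
    show "\<forall>yh. yh \<in> RanB \<and> (\<exists>s. strict_mono s \<and> (y \<circ> s) \<longlonglongrightarrow> yh) \<longrightarrow> optimal G yh"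
      using opt by blast
  qed
qed

end
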